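(* In the tabular setting with possibly stochastic empirical dynamics, every maximizer $\pi^*$ of $\bar R(\pi)$ and every maximizer $\pi_1^*$ of $\bar R_1(\pi)$ over all policies satisfy $$\operatorname{supp}(\pi^*(\cdot\mid s))\subseteq\operatorname{supp}(\beta(\cdot\mid s))\quad\text{and}\quad \operatorname{supp}(\pi_1^*(\cdot\mid s))\subseteq\operatorname{supp}(\beta(\cdot\mid s))\qquad\text{for all } s\in\mathcal D.$$
   Context: Finite state space $\mathcal S$ and finite action space $\mathcal A$. $\mathcal D$ is a finite dataset of transitions $(s,a,s')$; "$s\in\mathcal D$" means $s$ occurs as the first component of some transition. $\beta(a\mid s)$ is the empirical behavior policy (fraction of transitions from $s$ with action $a$). $M(s'\mid s,a)$ is the empirical dynamics model: the fraction of transitions from $(s,a)$ ending in $s'$ if $(s,a)$ occurs in $\mathcal D$, and $0$ otherwise. $N(s'\mid s)=\sum_a\beta(a\mid s)M(s'\mid s,a)$. $V:\mathcal S\to\mathbb R$ is a fixed real function and $\alpha\ge 0$ a constant. $Z(s)=\sum_{s'}\exp(\alpha V(s'))N(s'\mid s)$. A policy $\pi$ assigns a distribution $\pi(\cdot\mid s)$ on $\mathcal A$ to each state; $M(s'\mid s,\pi(\cdot\mid s)):=\sum_a\pi(a\mid s)M(s'\mid s,a)$. $\mathbb E_{(s,s')\sim\mathcal D}$ denotes the average over the transitions of $\mathcal D$. The objectives (with $\log 0=-\infty$) are $$\bar R(\pi)=\mathbb E_{(s,s')\sim\mathcal D}\Big[\tfrac{\exp(\alpha V(s'))}{Z(s)}\log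 M(s'\mid s,\pi(\cdot\mid s))\Big],\qquad \bar R_1(\pi)=\mathbb E_{(s,s')\sim\mathcal D}\Big[\tfrac{\exp(\alpha V(s'))}{\exp(\alpha V(s))}\log M(s'\mid s,\pi(\cdot\mid s))\Big].$$ *)

theory Defs
  imports "HOL-Probability.Probability"
begin

type_synonym ('s, 'a) dataset = "('s \<times> 'a \<times> 's) list"

definition cnt_s :: "('s, 'a) dataset \<Rightarrow> 's \<Rightarrow> nat" where
  "cnt_s D s = length (filter (\<lambda>(x, b, y). x = s) D)"

definition cnt_sa :: "('s, 'a) dataset \<Rightarrow> 's \<Rightarrow> 'a \<Rightarrow> nat" where
  "cnt_sa D s a = length (filter (\<lambda>(x, b, y). x = s \<and> b = a) D)"

definition cnt_sas :: "('s, 'a) dataset \<Rightarrow> 's \<Rightarrow> 'a \<Rightarrow> 's \<Rightarrow> nat" where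
  "cnt_sas D s a s' = length (filter (\<lambda>(x, b, y). x = s \<and> b = a \<and> y = s') D)"

text \<open>Empirical behaviour policy (set to 0 at states not occurring in D, where it is irrelevant).\<close>
definition beta :: "('s, 'a) dataset \<Rightarrow> 's \<Rightarrow> 'a \<Rightarrow> real" where
  "beta D s a = (if cnt_s D s = 0 then 0 else real (cnt_sa D s a) / real (cnt_s D s))"

definition Mdl :: "('s, 'a) dataset \<Rightarrow> 's \<Rightarrow> 'a \<Rightarrow> 's \<Rightarrow> real" where
  "Mdl D s a s' = (if cnt_sa D s a = 0 then 0 else real (cnt_sas D s a s') / real (cnt_sa D s a))"

definition Nmdl :: "('s, 'a::finite) dataset \<Rightarrow> 's \<Rightarrow> 's \<Rightarrow> real" where
  "Nmdl D s s' = (\<Sum>a\<in>UNIV. beta D s a * Mdl D s a s')"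

definition Zfun :: "('s::finite, 'a::finite) dataset \<Rightarrow> real \<Rightarrow> ('s \<Rightarrow> real) \<Rightarrow> 's \<Rightarrow> real" where
  "Zfun D \<alpha> V s = (\<Sum>s'\<in>UNIV. exp (\<alpha> * V s') * Nmdl D s s')"

definition Mpol :: "('s, 'a::finite) dataset \<Rightarrow> ('s \<Rightarrow> 'a pmf) \<Rightarrow> 's \<Rightarrow> 's \<Rightarrow> real" where
  "Mpol D \<pi> s s' = (\<Sum>a\<in>UNIV. pmf (\<pi> s) a * Mdl D s a s')"

text \<open>Logarithm with the convention log 0 = -\<infinity> (arguments here are always \<ge> 0).\<close>
definition elog :: "real \<Rightarrow> ereal" where
  "elog x = (if x > 0 then ereal (ln x) else -\<infinity>)"

definition avgD :: "('s, 'a) dataset \<Rightarrow> ('s \<times> 'a \<times> 's \<Rightarrow> ereal) \<Rightarrow> ereal" where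
  "avgD D f = (if D = [] then 0 else ereal (1 / real (length D)) * sum_list (map f D))"

definition Rbar :: "('s::finite, 'a::finite) dataset \<Rightarrow> real \<Rightarrow> ('s \<Rightarrow> real) \<Rightarrow> ('s \<Rightarrow> 'a pmf) \<Rightarrow> ereal" where
  "Rbar D \<alpha> V \<pi> = avgD D (\<lambda>(s, a, s').
     ereal (exp (\<alpha> * V s') / Zfun D \<alpha> V s) * elog (Mpol D \<pi> s s'))"

definition Rbar1 :: "('s::finite, 'a::finite) dataset \<Rightarrow> real \<Rightarrow> ('s \<Rightarrow> real) \<Rightarrow> ('s \<Rightarrow> 'a pmf) \<Rightarrow> ereal" where
  "Rbar1 D \<alpha> V \<pi> = avgD D (\<lambda>(s, a, s').
     ereal (exp (\<alpha> * V s') / exp (\<alpha> * V s)) * elog (Mpol D \<pi> s s'))"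

end

theory Submission
  imports Defs
begin

lemma cnt_sa_pos: "cnt_sa D s a \<noteq> 0 \<longleftrightarrow> (\<exists>y. (s,a,y) \<in> set D)"
  unfolding cnt_sa_def by (auto simp: filter_empty_conv)

lemma cnt_sas_pos: "cnt_sas D s a y \<noteq> 0 \<longleftrightarrow> (s,a,y) \<in> set D"
  unfolding cnt_sas_def by (auto simp: filter_empty_conv)

lemma cnt_s_pos: "cnt_s D s \<noteq> 0 \<longleftrightarrow> s \<in> fst ` set D"
  unfolding cnt_s_def by (force simp: filter_empty_conv)

lemma beta_nz: "s \<in> fst ` set D \<Longrightarrow> beta D s a \<noteq> 0 \<longleftrightarrow> cnt_sa D s a \<noteq> 0"
  using cnt_s_pos[of D s] by (simp add: beta_def)

lemma Mdl_nonneg: "Mdl D s a y \<ge> 0"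
  by (simp add: Mdl_def)

lemma Mdl_zero: "cnt_sa D s a = 0 \<Longrightarrow> Mdl D s a y = 0"
  by (simp add: Mdl_def)

lemma Mdl_pos: "(s,a,y) \<in> set D \<Longrightarrow> Mdl D s a y > 0"
  using cnt_sa_pos[of D s a] cnt_sas_pos[of D s a y] by (auto simp: Mdl_def)

lemma Mpol_nonneg: "Mpol D \<pi> s y \<ge> 0"
  unfolding Mpol_def by (intro sum_nonneg mult_nonneg_nonneg) (auto simp: Mdl_nonneg)

lemma sum_list_ereal: "sum_list (map (\<lambda>x. ereal (f x)) xs) = ereal (sum_list (map f xs))"
  by (induction xs) auto

lemma sum_list_minf:
  fixes f :: "'b \<Rightarrow> ereal"
  assumes "\<forall>x\<in>set xs. f x \<noteq> \<infinity>" "\<exists>x\<in>set xs. f x = -\<infinity>"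
  shows "sum_list (map f xs) = -\<infinity>"
  using assms
proof (induction xs)
  case Nil then show ?case by simp
next
  case (Cons a xs)
  have nt: "sum_list (map f xs) \<noteq> \<infinity>"
    using Cons.prems(1) by (induction xs) auto
  show ?case
  proof (cases "f a = -\<infinity>")
    case True then show ?thesis using nt by simp
  next
    case False
    then have "sum_list (map f xs) = -\<infinity>" using Cons by auto
    then show ?thesis using Cons.prems(1) by simp
  qed
qed

lemma sum_list_strict:
  fixes f g :: "'b \<Rightarrow> real"
  assumes "\<forall>x\<in>set xs. f x \<le> g x" "\<exists>x\<in>set xs. f x < g x"
  shows "sum_list (map f xs) < sum_list (map g xs)"
  using assms
proof (induction xs)
  case Nil then show ?case by simp
next
  case (Cons a xs)
  have le: "sum_list (map f xs) \<le> sum_list (map g xs)"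
    using Cons.prems(1) by (intro sum_list_mono) auto
  show ?case
  proof (cases "f a < g a")
    case True then show ?thesis using le by simp
  next
    case False
    then have "sum_list (map f xs) < sum_list (map g xs)" using Cons by auto
    then show ?thesis using Cons.prems(1) by simp
  qed
qed

definition F :: "('s, 'a::finite) dataset \<Rightarrow> ('s \<Rightarrow> 's \<Rightarrow> real) \<Rightarrow> ('s \<Rightarrow> 'a pmf) \<Rightarrow> ereal" where
  "F D w \<pi> = avgD D (\<lambda>(s, a, s'). ereal (w s s') * elog (Mpol D \<pi> s s'))"

lemma main:
  fixes D :: "('s, 'a::finite) dataset" and w :: "'s \<Rightarrow> 's \<Rightarrow> real"
  assumes wpos: "\<And>s a y. (s,a,y) \<in> set D \<Longrightarrow> w s y > 0"
    and max: "\<forall>\<pi>. F D w \<pi> \<le> F D w \<pi>s"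
  shows "\<forall>s\<in>fst`set D. set_pmf (\<pi>s s) \<subseteq> {a. beta D s a \<noteq> 0}"
proof (rule ccontr)
  assume "\<not> ?thesis"
  then obtain s0 a0 where s0: "s0 \<in> fst ` set D" and a0: "a0 \<in> set_pmf (\<pi>s s0)"
    and b0: "beta D s0 a0 = 0" by auto
  have c0: "cnt_sa D s0 a0 = 0" using beta_nz[OF s0] b0 by auto
  have Dne: "D \<noteq> []" using s0 by auto
  define G where "G s = {a. cnt_sa D s a \<noteq> 0}" for s
  define \<pi>0 where "\<pi>0 s = (if s \<in> fst ` set D then pmf_of_set (G s) else pmf_of_set UNIV)" for s
  have avg: "avgD D f = ereal (1 / real (length D)) * sum_list (map f D)" for f
    using Dne by (simp add: avgD_def)
  have M0: "Mpol D \<pi>0 s y > 0" if "(s,a,y) \<in> set D" for s a y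
  proof -
    have sD: "s \<in> fst ` set D" using that by force
    have aG: "a \<in> G s" using cnt_sa_pos[of D s a] that by (auto simp: G_def)
    have Gne: "G s \<noteq> {}" "finite (G s)" using aG by auto
    have "0 < pmf (\<pi>0 s) a * Mdl D s a y"
      using Mdl_pos[OF that] aG Gne sD by (simp add: \<pi>0_def card_gt_0_iff)
    also have "\<dots> \<le> Mpol D \<pi>0 s y" unfolding Mpol_def
      by (rule member_le_sum) (auto intro!: mult_nonneg_nonneg simp: Mdl_nonneg)
    finally show ?thesis .
  qed
  have term_fin: "ereal (w s y) * elog m = ereal (w s y * ln m)" if "m > 0" for s y m
    using that by (simp add: elog_def)
  have term_ninf: "ereal (w s y) * elog m \<noteq> \<infinity>" if "(s,a,y) \<in> set D" "m \<ge> 0" for s a y m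
    using wpos[OF that(1)] by (cases "m > 0") (auto simp: elog_def)
  have term_minf: "ereal (w s y) * elog m = -\<infinity>" if "(s,a,y) \<in> set D" "\<not> m > 0" for s a y m
    using wpos[OF that(1)] that(2) by (simp add: elog_def)
  define f0 :: "'s \<times> 'a \<times> 's \<Rightarrow> real" where "f0 = (\<lambda>(s, a, s'). w s s' * ln (Mpol D \<pi>0 s s'))"
  have "sum_list (map (\<lambda>(s, a, s'). ereal (w s s') * elog (Mpol D \<pi>0 s s')) D)
        = sum_list (map (\<lambda>x. ereal (f0 x)) D)"
    by (rule arg_cong[where f=sum_list], rule map_cong) (auto simp: f0_def term_fin M0)
  then have "F D w \<pi>0 = ereal (1 / real (length D) * sum_list (map f0 D))"
    by (simp add: F_def avg sum_list_ereal)
  moreover have "F D w \<pi>0 \<le> F D w \<pi>s" using max by blast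
  ultimately have "F D w \<pi>s \<noteq> -\<infinity>" by (metis MInfty_neq_ereal(1) ereal_infty_less_eq(2))
  then have nm: "sum_list (map (\<lambda>(s, a, s'). ereal (w s s') * elog (Mpol D \<pi>s s s')) D) \<noteq> -\<infinity>"
    by (auto simp: F_def avg)
  have Ms: "Mpol D \<pi>s s y > 0" if "(s,a,y) \<in> set D" for s a y
  proof (rule ccontr)
    assume nz: "\<not> Mpol D \<pi>s s y > 0"
    have "sum_list (map (\<lambda>(s, a, s'). ereal (w s s') * elog (Mpol D \<pi>s s s')) D) = -\<infinity>"
    proof (rule sum_list_minf)
      show "\<forall>x\<in>set D. (case x of (s, a, s') \<Rightarrow> ereal (w s s') * elog (Mpol D \<pi>s s s')) \<noteq> \<infinity>"
      proof
        fix x assume xD: "x \<in> set D"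
        obtain s1 a1 y1 where x: "x = (s1,a1,y1)" by (cases x)
        show "(case x of (s, a, s') \<Rightarrow> ereal (w s s') * elog (Mpol D \<pi>s s s')) \<noteq> \<infinity>"
        proof -
          have "(s1,a1,y1) \<in> set D" using xD x by simp
          from term_ninf[OF this Mpol_nonneg] show ?thesis unfolding x by simp
        qed
      qed
      show "\<exists>x\<in>set D. (case x of (s, a, s') \<Rightarrow> ereal (w s s') * elog (Mpol D \<pi>s s s')) = -\<infinity>"
        using that term_minf[OF that nz] by force
    qed
    then show False using nm by simp
  qed
  define p where "p = \<pi>s s0"
  obtain a1 y1 where t1: "(s0,a1,y1) \<in> set D" using s0 by auto
  have ne: "set_pmf p \<inter> G s0 \<noteq> {}"
  proof
    assume e: "set_pmf p \<inter> G s0 = {}"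
    have "Mpol D \<pi>s s0 y1 = 0" unfolding Mpol_def
    proof (rule sum.neutral, intro ballI)
      fix a assume "a \<in> (UNIV :: 'a set)"
      show "pmf (\<pi>s s0) a * Mdl D s0 a y1 = 0"
      proof (cases "a \<in> set_pmf p")
        case True then have "cnt_sa D s0 a = 0" using e by (auto simp: G_def)
        then show ?thesis by (simp add: Mdl_zero)
      next
        case False then show ?thesis by (simp add: p_def set_pmf_eq)
      qed
    qed
    then show False using Ms[OF t1] by simp
  qed
  define P where "P = measure_pmf.prob p (G s0)"
  have P0: "P > 0" using ne unfolding P_def by (auto intro: measure_pmf_posI)
  have P1: "P < 1"
  proof -
    have "measure_pmf.prob p (- G s0) > 0"
      using a0 c0 by (intro measure_pmf_posI[of a0]) (auto simp: p_def G_def)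
    moreover have "measure_pmf.prob p (G s0) + measure_pmf.prob p (- G s0) = 1"
      using measure_pmf.prob_compl[of "G s0" p] by (simp add: Compl_eq_Diff_UNIV)
    ultimately show ?thesis by (simp add: P_def)
  qed
  define \<pi>' where "\<pi>' s = (if s = s0 then cond_pmf p (G s0) else \<pi>s s)" for s
  have Mp: "Mpol D \<pi>' s0 y = Mpol D \<pi>s s0 y / P" for y
  proof -
    have "Mpol D \<pi>' s0 y = (\<Sum>a\<in>UNIV. pmf p a * Mdl D s0 a y / P)" unfolding Mpol_def
    proof (rule sum.cong[OF refl])
      fix a show "pmf (\<pi>' s0) a * Mdl D s0 a y = pmf p a * Mdl D s0 a y / P"
        by (cases "a \<in> G s0") (simp_all add: \<pi>'_def pmf_cond[OF ne] P_def, simp_all add: G_def Mdl_zero)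
    qed
    also have "\<dots> = Mpol D \<pi>s s0 y / P" unfolding Mpol_def p_def
      by (simp add: sum_divide_distrib)
    finally show ?thesis .
  qed
  define fs :: "'s \<times> 'a \<times> 's \<Rightarrow> real" where "fs = (\<lambda>(s, a, s'). w s s' * ln (Mpol D \<pi>s s s'))"
  define f' :: "'s \<times> 'a \<times> 's \<Rightarrow> real" where "f' = (\<lambda>(s, a, s'). w s s' * ln (Mpol D \<pi>' s s'))"
  have Mo: "Mpol D \<pi>' s y = Mpol D \<pi>s s y" if "s \<noteq> s0" for s y
    using that by (simp add: Mpol_def \<pi>'_def)
  have Mp': "Mpol D \<pi>' s y > 0" if "(s,a,y) \<in> set D" for s a y
    using Ms[OF that] Mp P0 Mo by (cases "s = s0") auto
  have "sum_list (map (\<lambda>(s, a, s'). ereal (w s s') * elog (Mpol D \<pi>s s s')) D)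
        = sum_list (map (\<lambda>x. ereal (fs x)) D)"
    by (rule arg_cong[where f=sum_list], rule map_cong) (auto simp: fs_def term_fin Ms)
  then have Fs: "F D w \<pi>s = ereal (1 / real (length D) * sum_list (map fs D))"
    by (simp add: F_def avg sum_list_ereal)
  have "sum_list (map (\<lambda>(s, a, s'). ereal (w s s') * elog (Mpol D \<pi>' s s')) D)
        = sum_list (map (\<lambda>x. ereal (f' x)) D)"
    by (rule arg_cong[where f=sum_list], rule map_cong) (auto simp: f'_def term_fin Mp')
  then have F': "F D w \<pi>' = ereal (1 / real (length D) * sum_list (map f' D))"
    by (simp add: F_def avg sum_list_ereal)
  have lnP: "ln (m / P) > ln m" if "m > 0" for m
    using that P0 P1 by (simp add: ln_div)
  have le: "fs x \<le> f' x" if "x \<in> set D" for x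
  proof -
    obtain s a y where x: "x = (s,a,y)" by (cases x)
    show ?thesis
    proof (cases "s = s0")
      case True
      then show ?thesis using lnP[OF Ms[of s a y]] that x wpos[of s a y]
        by (auto simp: fs_def f'_def Mp)
    next
      case False then show ?thesis using x by (simp add: fs_def f'_def Mo)
    qed
  qed
  have lt: "fs (s0,a1,y1) < f' (s0,a1,y1)"
    using lnP[OF Ms[OF t1]] wpos[OF t1] by (simp add: fs_def f'_def Mp)
  have "sum_list (map fs D) < sum_list (map f' D)"
    by (rule sum_list_strict) (use le lt t1 in auto)
  then have "F D w \<pi>s < F D w \<pi>'"
    unfolding Fs F' using Dne by (simp add: divide_strict_right_mono)
  then show False using max[rule_format, of \<pi>'] by simp
qed

theorem proposition2:
  fixes D :: "('s::finite, 'a::finite) dataset"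
    and V :: "'s \<Rightarrow> real" and \<alpha> :: real
    and \<pi>star \<pi>1star :: "'s \<Rightarrow> 'a pmf"
  assumes "0 \<le> \<alpha>"
    and "\<forall>\<pi>. Rbar D \<alpha> V \<pi> \<le> Rbar D \<alpha> V \<pi>star"
    and "\<forall>\<pi>. Rbar1 D \<alpha> V \<pi> \<le> Rbar1 D \<alpha> V \<pi>1star"
  shows "\<forall>s \<in> fst ` set D.
           set_pmf (\<pi>star s) \<subseteq> {a. beta D s a \<noteq> 0} \<and>
           set_pmf (\<pi>1star s) \<subseteq> {a. beta D s a \<noteq> 0}"
proof -
  have Zpos: "Zfun D \<alpha> V s > 0" if "(s,a,y) \<in> set D" for s a y
  proof -
    have sD: "s \<in> fst ` set D" using that by force
    have "beta D s a > 0"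
      using cnt_s_pos[of D s] sD cnt_sa_pos[of D s a] that
      by (auto simp: beta_def)
    then have "beta D s a * Mdl D s a y > 0" using Mdl_pos[OF that] by simp
    also have "\<dots> \<le> Nmdl D s y" unfolding Nmdl_def
      by (rule member_le_sum) (auto intro!: mult_nonneg_nonneg simp: beta_def Mdl_nonneg)
    finally have N: "Nmdl D s y > 0" .
    have "0 < exp (\<alpha> * V y) * Nmdl D s y" using N by simp
    also have "\<dots> \<le> Zfun D \<alpha> V s" unfolding Zfun_def
      by (rule member_le_sum) (auto intro!: mult_nonneg_nonneg sum_nonneg simp: Nmdl_def beta_def Mdl_nonneg)
    finally show ?thesis .
  qed
  have R: "Rbar D \<alpha> V \<pi> = F D (\<lambda>s y. exp (\<alpha> * V y) / Zfun D \<alpha> V s) \<pi>" for \<pi>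
    by (simp add: Rbar_def F_def)
  have R1: "Rbar1 D \<alpha> V \<pi> = F D (\<lambda>s y. exp (\<alpha> * V y) / exp (\<alpha> * V s)) \<pi>" for \<pi>
    by (simp add: Rbar1_def F_def)
  have A: "\<forall>s\<in>fst`set D. set_pmf (\<pi>star s) \<subseteq> {a. beta D s a \<noteq> 0}"
    by (rule main[of D "\<lambda>s y. exp (\<alpha> * V y) / Zfun D \<alpha> V s"]) (use Zpos assms(2) R in auto)
  have B: "\<forall>s\<in>fst`set D. set_pmf (\<pi>1star s) \<subseteq> {a. beta D s a \<noteq> 0}"
    by (rule main[of D "\<lambda>s y. exp (\<alpha> * V y) / exp (\<alpha> * V s)"]) (use assms(3) R1 in auto)
  show ?thesis using A B by blast
qed

end
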